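(* Quaternary Hermitian formally self-dual LCD codes with parameters $[32s,16s,6]_4$, $[40s,20s,7]_4$ and $[48s,24s,8]_4$ exist for every integer $s\ge1$.
   Context: Over $\mathbb{F}_4$ the Hermitian inner product is $(\mathbf{x},\mathbf{y})_H=\sum_i x_iy_i^{2}$, with dual $\mathcal{C}^{\perp_H}$. A code is Hermitian LCD if $\mathcal{C}\cap\mathcal{C}^{\perp_H}=\{0\}$, and Hermitian formally self-dual if it has the same weight distribution as $\mathcal{C}^{\perp_H}$. $[n,k,d]_4$ denotes length $n$, dimension $k$, minimum distance $d$. *)

theory Defs
  imports Main
begin

datatype gf4 = G0 | G1 | GW | GV  (* G0 = 0, G1 = 1, GW = w, GV = w^2 = w + 1 *)

(* additive structure: bit encoding G0=00, G1=10, GW=01, GV=11 *)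
fun gf4_add :: "gf4 \<Rightarrow> gf4 \<Rightarrow> gf4" where
  "gf4_add G0 y = y"
| "gf4_add x G0 = x"
| "gf4_add G1 G1 = G0" | "gf4_add G1 GW = GV" | "gf4_add G1 GV = GW"
| "gf4_add GW G1 = GV" | "gf4_add GW GW = G0" | "gf4_add GW GV = G1"
| "gf4_add GV G1 = GW" | "gf4_add GV GW = G1" | "gf4_add GV GV = G0"

fun gf4_mul :: "gf4 \<Rightarrow> gf4 \<Rightarrow> gf4" where
  "gf4_mul G0 y = G0"
| "gf4_mul x G0 = G0"
| "gf4_mul G1 y = y"
| "gf4_mul x G1 = x"
| "gf4_mul GW GW = GV" | "gf4_mul GW GV = G1"
| "gf4_mul GV GW = G1" | "gf4_mul GV GV = GW"

fun gf4_inv :: "gf4 \<Rightarrow> gf4" where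
  "gf4_inv G0 = G0" | "gf4_inv G1 = G1" | "gf4_inv GW = GV" | "gf4_inv GV = GW"

instantiation gf4 :: field
begin
definition "0 = G0"
definition "1 = G1"
definition "x + y = gf4_add x y"
definition "x * y = gf4_mul x y"
definition "uminus x = (x :: gf4)"
definition "x - y = gf4_add x y"
definition "inverse x = gf4_inv x"
definition "x div y = gf4_mul x (gf4_inv y)"
instance
proof
  fix a b c :: gf4
  show "a + b + c = a + (b + c)" unfolding plus_gf4_def
    by (cases a; cases b; cases c; simp)
  show "a + b = b + a" unfolding plus_gf4_def by (cases a; cases b; simp)
  show "0 + a = a" unfolding plus_gf4_def zero_gf4_def by simp
  show "- a + a = 0" unfolding plus_gf4_def zero_gf4_def uminus_gf4_def
    by (cases a; simp)
  show "a - b = a + - b" unfolding plus_gf4_def minus_gf4_def uminus_gf4_def by simp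
  show "a * b * c = a * (b * c)" unfolding times_gf4_def
    by (cases a; cases b; cases c; simp)
  show "a * b = b * a" unfolding times_gf4_def by (cases a; cases b; simp)
  show "1 * a = a" unfolding times_gf4_def one_gf4_def by (cases a; simp)
  show "(a + b) * c = a * c + b * c" unfolding times_gf4_def plus_gf4_def
    by (cases a; cases b; cases c; simp)
  show "(0::gf4) \<noteq> 1" unfolding zero_gf4_def one_gf4_def by simp
  show "a \<noteq> 0 \<Longrightarrow> inverse a * a = 1"
    unfolding zero_gf4_def one_gf4_def inverse_gf4_def times_gf4_def by (cases a; simp)
  show "a div b = a * inverse b" unfolding divide_gf4_def times_gf4_def inverse_gf4_def by simp
  show "inverse (0::gf4) = 0" unfolding inverse_gf4_def zero_gf4_def by simp
qed
end

lemma UNIV_gf4: "(UNIV :: gf4 set) = {0, 1, GW, GV}"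
  using gf4.exhaust by (auto simp: zero_gf4_def one_gf4_def)

text \<open>Vectors of length n over F_4 are functions nat => gf4 vanishing outside {..<n}.\<close>
definition vecs :: "nat \<Rightarrow> (nat \<Rightarrow> gf4) set" where
  "vecs n = {x. \<forall>i\<ge>n. x i = 0}"

definition linear_code :: "nat \<Rightarrow> nat \<Rightarrow> (nat \<Rightarrow> gf4) set \<Rightarrow> bool" where
  "linear_code n k C \<longleftrightarrow>
     (\<exists>b :: nat \<Rightarrow> nat \<Rightarrow> gf4. (\<forall>j<k. b j \<in> vecs n) \<and>
        bij_betw (\<lambda>c. (\<lambda>i. \<Sum>j<k. c j * b j i)) (vecs k) C)"

definition herm_ip :: "nat \<Rightarrow> (nat \<Rightarrow> gf4) \<Rightarrow> (nat \<Rightarrow> gf4) \<Rightarrow> gf4" where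
  "herm_ip n x y = (\<Sum>i<n. x i * (y i)^2)"

definition herm_dual :: "nat \<Rightarrow> (nat \<Rightarrow> gf4) set \<Rightarrow> (nat \<Rightarrow> gf4) set" where
  "herm_dual n C = {y \<in> vecs n. \<forall>x\<in>C. herm_ip n x y = 0}"

definition herm_LCD :: "nat \<Rightarrow> (nat \<Rightarrow> gf4) set \<Rightarrow> bool" where
  "herm_LCD n C \<longleftrightarrow> C \<inter> herm_dual n C = {\<lambda>i. 0}"

definition hweight :: "nat \<Rightarrow> (nat \<Rightarrow> gf4) \<Rightarrow> nat" where
  "hweight n x = card {i. i < n \<and> x i \<noteq> 0}"

definition hdist :: "nat \<Rightarrow> (nat \<Rightarrow> gf4) \<Rightarrow> (nat \<Rightarrow> gf4) \<Rightarrow> nat" where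
  "hdist n x y = card {i. i < n \<and> x i \<noteq> y i}"

definition herm_formally_self_dual :: "nat \<Rightarrow> (nat \<Rightarrow> gf4) set \<Rightarrow> bool" where
  "herm_formally_self_dual n C \<longleftrightarrow>
     (\<forall>w. card {x \<in> C. hweight n x = w} = card {x \<in> herm_dual n C. hweight n x = w})"

definition min_dist :: "nat \<Rightarrow> (nat \<Rightarrow> gf4) set \<Rightarrow> nat" where
  "min_dist n C = Min {hdist n x y | x y. x \<in> C \<and> y \<in> C \<and> x \<noteq> y}"

definition herm_fsd_LCD :: "nat \<Rightarrow> nat \<Rightarrow> nat \<Rightarrow> (nat \<Rightarrow> gf4) set \<Rightarrow> bool" where
  "herm_fsd_LCD n k d C \<longleftrightarrow> linear_code n k C \<and> min_dist n C = d \<and>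
     herm_LCD n C \<and> herm_formally_self_dual n C"

end

theory Submission
  imports Defs
begin


lemma gf4_add_self[simp]: "(a::gf4) + a = 0"
  by (cases a) (simp_all add: plus_gf4_def zero_gf4_def)

lemma gf4_pow4: "(a::gf4)^4 = a"
  by (cases a) (simp_all add: times_gf4_def one_gf4_def numeral_eq_Suc)

lemma gf4_sq_add: "((a::gf4) + b)^2 = a^2 + b^2"
  by (cases a; cases b) (simp_all add: times_gf4_def plus_gf4_def power2_eq_square zero_gf4_def)

lemma gf4_sq_sum: "(\<Sum>i\<in>I. (f i::gf4))^2 = (\<Sum>i\<in>I. (f i)^2)"
proof (cases "finite I")
  case True
  then show ?thesis by (induction I rule: finite_induct) (simp_all add: gf4_sq_add)
qed simp

lemma gf4_add_eq0: "(a::gf4) + b = 0 \<longleftrightarrow> a = b"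
  by (cases a; cases b) (simp_all add: plus_gf4_def zero_gf4_def)

lemma gf4_sq_sq: "((a::gf4)^2)^2 = a"
  by (metis gf4_pow4 power_mult numeral_times_numeral semiring_norm(12) semiring_norm(13))

lemma sum_split_nat: "(\<Sum>i<(K::nat)+n. f i) = (\<Sum>i<K. f i) + (\<Sum>i<n. (f (K+i)::'a::comm_monoid_add))"
  by (induction n) (simp_all add: add.assoc)

lemma hweight_sum: "hweight n x = (\<Sum>i<n. if x i \<noteq> 0 then 1 else 0)"
proof -
  have "{i. i < n \<and> x i \<noteq> 0} = {i\<in>{..<n}. x i \<noteq> 0}" by auto
  then show ?thesis unfolding hweight_def
    by (simp add: sum.inter_filter[symmetric])
qed

section \<open>Systematic codes [I | A]\<close>

definition mv :: "(nat \<Rightarrow> nat \<Rightarrow> gf4) \<Rightarrow> nat \<Rightarrow> (nat \<Rightarrow> gf4) \<Rightarrow> nat \<Rightarrow> gf4" where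
  "mv A K x l = (\<Sum>j<K. x j * A j l)"

definition cw :: "(nat \<Rightarrow> nat \<Rightarrow> gf4) \<Rightarrow> nat \<Rightarrow> (nat \<Rightarrow> gf4) \<Rightarrow> nat \<Rightarrow> gf4" where
  "cw A K x i = (if i < K then x i else if i < 2*K then mv A K x (i-K) else 0)"

definition cwd :: "(nat \<Rightarrow> nat \<Rightarrow> gf4) \<Rightarrow> nat \<Rightarrow> (nat \<Rightarrow> gf4) \<Rightarrow> nat \<Rightarrow> gf4" where
  "cwd A K z i = (if i < K then mv A K z i else if i < 2*K then z (i-K) else 0)"

definition scode :: "(nat \<Rightarrow> nat \<Rightarrow> gf4) \<Rightarrow> nat \<Rightarrow> (nat \<Rightarrow> gf4) set" where
  "scode A K = cw A K ` vecs K"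

definition swp :: "nat \<Rightarrow> (nat \<Rightarrow> gf4) \<Rightarrow> nat \<Rightarrow> gf4" where
  "swp K v i = (if i < K then v (i+K) else if i < 2*K then v (i-K) else 0)"

lemma cw_vecs: "cw A K x \<in> vecs (2*K)" by (simp add: vecs_def cw_def)
lemma cwd_vecs: "cwd A K x \<in> vecs (2*K)" by (simp add: vecs_def cwd_def)

lemma mv_cong: "(\<And>j. j < K \<Longrightarrow> x j = y j) \<Longrightarrow> mv A K x l = mv A K y l"
  unfolding mv_def by (rule sum.cong) auto

lemma mv_zero: "mv A K (\<lambda>i. 0) l = 0" by (simp add: mv_def)

lemma mv_add: "mv A K (\<lambda>i. x i + y i) l = mv A K x l + mv A K y l"
  by (simp add: mv_def distrib_right sum.distrib)

lemma sum_unit_l: "(i::nat) < K \<Longrightarrow> (\<Sum>j<K. (if j = i then (1::gf4) else 0) * f j) = f i"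
proof -
  assume i: "i < K"
  have "(\<Sum>j<K. (if j = i then (1::gf4) else 0) * f j) = (\<Sum>j<K. if j = i then f j else 0)"
    by (rule sum.cong) auto
  then show ?thesis using i by (simp add: sum.delta)
qed

lemma sum_unit_r: "(i::nat) < K \<Longrightarrow> (\<Sum>j<K. f j * (if i = j then (1::gf4) else 0)) = f i"
proof -
  assume i: "i < K"
  have "(\<Sum>j<K. f j * (if i = j then (1::gf4) else 0)) = (\<Sum>j<K. if j = i then f j else 0)"
    by (rule sum.cong) auto
  then show ?thesis using i by (simp add: sum.delta)
qed

lemma mv_unit: "j < K \<Longrightarrow> mv A K (\<lambda>i. if i = j then 1 else 0) l = A j l"
  by (simp add: mv_def sum_unit_l)

lemma cw_add: "cw A K (\<lambda>i. x i + y i) i = cw A K x i + cw A K y i"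
  by (simp add: cw_def mv_add)

lemma cw_zero: "cw A K (\<lambda>i. 0) = (\<lambda>i. 0)"
  by (rule ext) (simp add: cw_def mv_zero)

lemma cwd_zero: "cwd A K (\<lambda>i. 0) = (\<lambda>i. 0)"
  by (rule ext) (simp add: cwd_def mv_zero)

lemma hweight_cw: "hweight (2*K) (cw A K x) = hweight K x + hweight K (mv A K x)"
proof -
  have "hweight (2*K) (cw A K x) = (\<Sum>i<K+K. if cw A K x i \<noteq> 0 then 1 else 0)"
    by (simp add: hweight_sum mult_2)
  also have "\<dots> = (\<Sum>i<K. if x i \<noteq> 0 then 1 else 0) + (\<Sum>i<K. if mv A K x i \<noteq> 0 then 1 else 0)"
    by (simp add: sum_split_nat cw_def)
  finally show ?thesis by (simp add: hweight_sum)
qed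

lemma linear_code_code: "linear_code (2*K) K (scode A K)"
proof -
  define b where "b j = cw A K (\<lambda>i. if i = j then 1 else 0)" for j
  have eq: "(\<lambda>i. \<Sum>j<K. c j * b j i) = cw A K c" for c
  proof
    fix i
    show "(\<Sum>j<K. c j * b j i) = cw A K c i"
    proof (cases "i < K")
      case True
      then show ?thesis by (simp add: b_def cw_def sum_unit_r)
    next
      case False
      have "(\<Sum>j<K. c j * b j i) = (\<Sum>j<K. c j * (if i < 2*K then A j (i-K) else 0))"
        using False by (intro sum.cong) (auto simp: b_def cw_def mv_unit)
      then show ?thesis using False by (simp add: cw_def mv_def)
    qed
  qed
  have inj: "inj_on (cw A K) (vecs K)"
  proof (rule inj_onI)
    fix x y assume x: "x \<in> vecs K" and y: "y \<in> vecs K" and e: "cw A K x = cw A K y"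
    show "x = y"
    proof
      fix i
      show "x i = y i"
      proof (cases "i < K")
        case True
        then show ?thesis using fun_cong[OF e, of i] by (simp add: cw_def)
      next
        case False
        then show ?thesis using x y by (simp add: vecs_def)
      qed
    qed
  qed
  show ?thesis unfolding linear_code_def
    apply (rule exI[of _ b])
  proof (intro conjI allI impI)
    show "b j \<in> vecs (2*K)" for j by (simp add: b_def cw_vecs)
    have e2: "(\<lambda>c i. \<Sum>j<K. c j * b j i) = cw A K" using eq by (intro ext) metis
    show "bij_betw (\<lambda>c i. \<Sum>j<K. c j * b j i) (vecs K) (scode A K)"
      unfolding e2 using inj by (simp add: bij_betw_def scode_def)
  qed
qed

lemma ip_cw:
  "herm_ip (2*K) (cw A K x) y = (\<Sum>j<K. x j * (y j ^2 + (\<Sum>l<K. A j l * y (K+l) ^2)))"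
proof -
  have "herm_ip (2*K) (cw A K x) y = (\<Sum>i<K+K. cw A K x i * y i ^2)"
    by (simp add: herm_ip_def mult_2)
  also have "\<dots> = (\<Sum>i<K. x i * y i ^2) + (\<Sum>l<K. mv A K x l * y (K+l) ^2)"
    by (simp add: sum_split_nat cw_def)
  also have "(\<Sum>l<K. mv A K x l * y (K+l) ^2) = (\<Sum>j<K. x j * (\<Sum>l<K. A j l * y (K+l) ^2))"
    unfolding mv_def sum_distrib_right sum_distrib_left
    by (subst sum.swap) (simp add: mult.assoc)
  finally show ?thesis by (simp add: distrib_left sum.distrib)
qed

lemma dual_code:
  assumes herm: "\<forall>i<K. \<forall>j<K. A j i = A i j ^ 2"
  shows "herm_dual (2*K) (scode A K) = cwd A K ` vecs K"
proof
  show "herm_dual (2*K) (scode A K) \<subseteq> cwd A K ` vecs K"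
  proof
    fix y assume "y \<in> herm_dual (2*K) (scode A K)"
    then have yv: "y \<in> vecs (2*K)" and orth: "\<And>x. x \<in> scode A K \<Longrightarrow> herm_ip (2*K) x y = 0"
      by (auto simp: herm_dual_def)
    define z where "z l = (if l < K then y (K+l) else 0)" for l
    have zv: "z \<in> vecs K" by (simp add: z_def vecs_def)
    have "y = cwd A K z"
    proof
      fix i
      show "y i = cwd A K z i"
      proof (cases "i < K")
        case True
        let ?S = "\<Sum>l<K. A i l * y (K+l) ^2"
        have "(\<lambda>j. if j = i then 1 else 0) \<in> vecs K" using True by (simp add: vecs_def)
        then have "herm_ip (2*K) (cw A K (\<lambda>j. if j = i then 1 else 0)) y = 0"
          by (intro orth) (simp add: scode_def)
        then have "y i ^2 + ?S = 0" using True
          by (simp add: ip_cw sum_unit_l)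
        then have e: "y i ^2 = ?S" by (simp add: gf4_add_eq0)
        have "y i = (y i ^2)^2" by (rule gf4_sq_sq[symmetric])
        also have "\<dots> = (\<Sum>l<K. (A i l)^2 * (y (K+l)^2)^2)"
          by (simp add: e gf4_sq_sum power_mult_distrib)
        also have "\<dots> = (\<Sum>l<K. z l * A l i)"
        proof (rule sum.cong)
          fix l assume "l \<in> {..<K}"
          then have "l < K" by simp
          then have "A l i = (A i l)^2" using herm True by blast
          then show "(A i l)^2 * (y (K+l)^2)^2 = z l * A l i"
            using \<open>l \<in> {..<K}\<close> by (simp add: gf4_sq_sq gf4_pow4 z_def mult.commute)
        qed simp
        finally show ?thesis using True by (simp add: cwd_def mv_def)
      next
        case False
        then show ?thesis using yv by (auto simp: cwd_def z_def vecs_def)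
      qed
    qed
    then show "y \<in> cwd A K ` vecs K" using zv by blast
  qed
next
  show "cwd A K ` vecs K \<subseteq> herm_dual (2*K) (scode A K)"
  proof
    fix y assume "y \<in> cwd A K ` vecs K"
    then obtain z where zv: "z \<in> vecs K" and y: "y = cwd A K z" by blast
    have "herm_ip (2*K) x y = 0" if "x \<in> scode A K" for x
    proof -
      obtain a where x: "x = cw A K a" using \<open>x \<in> scode A K\<close> by (auto simp: scode_def)
      have "y j ^2 + (\<Sum>l<K. A j l * y (K+l) ^2) = 0" if j: "j < K" for j
      proof -
        have "y j ^2 = (\<Sum>l<K. (z l)^2 * (A l j)^2)"
          using j by (simp add: y cwd_def mv_def gf4_sq_sum power_mult_distrib)
        also have "\<dots> = (\<Sum>l<K. A j l * y (K+l) ^2)"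
        proof (rule sum.cong)
          fix l assume l: "l \<in> {..<K}"
          then have "l < K" by simp
          then have "A l j = (A j l)^2" using herm j by blast
          then show "(z l)^2 * (A l j)^2 = A j l * y (K+l) ^2"
            using l by (simp add: gf4_sq_sq gf4_pow4 y cwd_def mult.commute)
        qed simp
        finally show ?thesis by simp
      qed
      then show ?thesis by (simp add: x ip_cw)
    qed
    then show "y \<in> herm_dual (2*K) (scode A K)"
      by (simp add: herm_dual_def y cwd_vecs)
  qed
qed




lemma lcd_code:
  assumes herm: "\<forall>i<K. \<forall>j<K. A j i = A i j ^ 2"
    and inj: "\<forall>u\<in>vecs K. (\<forall>l<K. mv A K u l = u l) \<longrightarrow> u = (\<lambda>i. 0)"
  shows "herm_LCD (2*K) (scode A K)"
proof -
  have "scode A K \<inter> cwd A K ` vecs K = {\<lambda>i. 0}"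
  proof
    show "{\<lambda>i. 0} \<subseteq> scode A K \<inter> cwd A K ` vecs K"
    proof -
      have z: "(\<lambda>i. 0::gf4) \<in> vecs K" by (simp add: vecs_def)
      have "(\<lambda>i. 0) \<in> scode A K" using imageI[OF z, of "cw A K"] cw_zero[of A K] by (simp add: scode_def)
      moreover have "(\<lambda>i. 0) \<in> cwd A K ` vecs K" using imageI[OF z, of "cwd A K"] cwd_zero[of A K] by simp
      ultimately show ?thesis by simp
    qed
  next
    show "scode A K \<inter> cwd A K ` vecs K \<subseteq> {\<lambda>i. 0}"
    proof
      fix v assume "v \<in> scode A K \<inter> cwd A K ` vecs K"
      then obtain x z where xv: "x \<in> vecs K" and zv: "z \<in> vecs K"
        and vx: "v = cw A K x" and vz: "v = cwd A K z" by (auto simp: scode_def)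
      have e1: "x i = mv A K z i" if "i < K" for i
        using fun_cong[OF vx, of i] fun_cong[OF vz, of i] that by (simp add: cw_def cwd_def)
      have e2: "mv A K x l = z l" if "l < K" for l
        using fun_cong[OF vx, of "K+l"] fun_cong[OF vz, of "K+l"] that by (simp add: cw_def cwd_def)
      define u where "u l = (if l < K then x l + z l else 0)" for l
      have uv: "u \<in> vecs K" by (simp add: u_def vecs_def)
      have "mv A K u l = u l" if l: "l < K" for l
      proof -
        have "mv A K u l = mv A K (\<lambda>i. x i + z i) l" by (rule mv_cong) (simp add: u_def)
        also have "\<dots> = z l + x l" using e1 e2 l by (simp add: mv_add add.commute)
        finally show ?thesis using l by (simp add: u_def add.commute)
      qed
      then have "u = (\<lambda>i. 0)" using inj uv by blast
      have xz: "x i = z i" if "i < K" for i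
      proof -
        have "u i = 0" using \<open>u = (\<lambda>i. 0)\<close> by simp
        then have "x i + z i = 0" using that by (simp add: u_def)
        then show ?thesis by (simp add: gf4_add_eq0)
      qed
      have "mv A K x l = x l" if "l < K" for l using e2 xz that by simp
      then have "x = (\<lambda>i. 0)" using inj xv by blast
      then show "v \<in> {\<lambda>i. 0}" using vx cw_zero by simp
    qed
  qed
  then show ?thesis unfolding herm_LCD_def using dual_code[OF herm] by simp
qed

lemma swp_cw: "swp K (cw A K x) = cwd A K x"
proof (rule ext)
  fix i
  show "swp K (cw A K x) i = cwd A K x i"
  proof (cases "i < K")
    case True
    then show ?thesis by (simp add: swp_def cw_def cwd_def)
  next
    case False
    show ?thesis
    proof (cases "i < 2*K")
      case True
      then obtain j where "i = j + K" "j < K" using False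
        by (metis add.commute add_less_imp_less_left le_add_diff_inverse mult_2 not_less)
      then show ?thesis by (simp add: swp_def cw_def cwd_def)
    next
      case False2: False
      then show ?thesis using False by (simp add: swp_def cw_def cwd_def)
    qed
  qed
qed

lemma swp_swp: "v \<in> vecs (2*K) \<Longrightarrow> swp K (swp K v) = v"
proof (rule ext)
  fix i assume v: "v \<in> vecs (2*K)"
  show "swp K (swp K v) i = v i"
  proof (cases "i < K")
    case True
    then show ?thesis by (simp add: swp_def)
  next
    case False
    show ?thesis
    proof (cases "i < 2*K")
      case True
      then obtain j where "i = j + K" "j < K" using False
        by (metis add.commute add_less_imp_less_left le_add_diff_inverse mult_2 not_less)
      then show ?thesis by (simp add: swp_def)
    next
      case False2: False
      then show ?thesis using False v by (simp add: swp_def vecs_def)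
    qed
  qed
qed

lemma hweight_swp: "hweight (2*K) (swp K v) = hweight (2*K) v"
proof -
  have "hweight (2*K) (swp K v) = (\<Sum>i<K+K. if swp K v i \<noteq> 0 then 1 else 0)"
    by (simp add: hweight_sum mult_2)
  also have "\<dots> = (\<Sum>i<K. if v (i+K) \<noteq> 0 then 1 else 0) + (\<Sum>i<K. if v i \<noteq> 0 then 1 else 0)"
    by (simp add: sum_split_nat swp_def)
  also have "\<dots> = (\<Sum>i<K+K. if v i \<noteq> 0 then 1 else 0)"
    by (simp add: sum_split_nat add.commute)
  finally show ?thesis by (simp add: hweight_sum mult_2)
qed

lemma fsd_code:
  assumes herm: "\<forall>i<K. \<forall>j<K. A j i = A i j ^ 2"
  shows "herm_formally_self_dual (2*K) (scode A K)"
  unfolding herm_formally_self_dual_def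
proof
  fix w
  have d: "herm_dual (2*K) (scode A K) = swp K ` scode A K"
    using dual_code[OF herm] unfolding scode_def image_image swp_cw by simp
  have sub: "scode A K \<subseteq> vecs (2*K)" by (auto simp: scode_def cw_vecs)
  have injs: "inj_on (swp K) (scode A K)"
    by (rule inj_onI) (metis sub subsetD swp_swp)
  have "{x \<in> swp K ` scode A K. hweight (2*K) x = w} = swp K ` {x \<in> scode A K. hweight (2*K) x = w}"
    by (auto simp: hweight_swp)
  moreover have "inj_on (swp K) {x \<in> scode A K. hweight (2*K) x = w}"
    using injs by (rule inj_on_subset) auto
  ultimately show "card {x \<in> scode A K. hweight (2*K) x = w} = card {x \<in> herm_dual (2*K) (scode A K). hweight (2*K) x = w}"
    unfolding d by (simp add: card_image)
qed

lemma hdist_le: "hdist n x y \<le> n"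
proof -
  have "hdist n x y \<le> card {..<n}" unfolding hdist_def by (rule card_mono) auto
  then show ?thesis by simp
qed

lemma min_dist_code:
  assumes md: "\<forall>x\<in>vecs K. x \<noteq> (\<lambda>i. 0) \<longrightarrow> d \<le> hweight K x + hweight K (mv A K x)"
    and x0: "x0 \<in> vecs K" "x0 \<noteq> (\<lambda>i. 0)" "hweight K x0 + hweight K (mv A K x0) = d"
  shows "min_dist (2*K) (scode A K) = d"
  unfolding min_dist_def
proof (rule Min_eqI)
  let ?S = "{hdist (2*K) x y | x y. x \<in> scode A K \<and> y \<in> scode A K \<and> x \<noteq> y}"
  show "finite ?S"
    by (rule finite_subset[of _ "{..2*K}"]) (auto simp: hdist_le)
  show "d \<le> s" if "s \<in> ?S" for s
  proof -
    obtain a b where s: "s = hdist (2*K) a b" and a: "a \<in> scode A K" and b: "b \<in> scode A K" and ab: "a \<noteq> b"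
      using \<open>s \<in> ?S\<close> by blast
    obtain x y where xv: "x \<in> vecs K" and yv: "y \<in> vecs K" and ax: "a = cw A K x" and yb: "b = cw A K y"
      using a b by (auto simp: scode_def)
    let ?z = "\<lambda>i. x i + y i"
    have zv: "?z \<in> vecs K" using xv yv by (simp add: vecs_def)
    have "?z \<noteq> (\<lambda>i. 0)"
    proof
      assume "?z = (\<lambda>i. 0)"
      then have "x = y" by (intro ext) (metis gf4_add_eq0)
      then show False using ab ax yb by simp
    qed
    then have "d \<le> hweight K ?z + hweight K (mv A K ?z)" using md zv by blast
    also have "\<dots> = hweight (2*K) (cw A K ?z)" by (simp add: hweight_cw)
    also have "\<dots> = s"
    proof -
      have "{i. i < 2*K \<and> cw A K ?z i \<noteq> 0} = {i. i < 2*K \<and> a i \<noteq> b i}"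
        using gf4_add_eq0 by (auto simp only: cw_add ax yb)
      then show ?thesis unfolding s hdist_def hweight_def by simp
    qed
    finally show ?thesis .
  qed
  show "d \<in> ?S"
  proof -
    have z: "(\<lambda>i. 0::gf4) \<in> vecs K" by (simp add: vecs_def)
    have "cw A K x0 \<in> scode A K" using x0 by (simp add: scode_def)
    moreover have "(\<lambda>i. 0) \<in> scode A K" using imageI[OF z, of "cw A K"] cw_zero[of A K] by (simp add: scode_def)
    moreover have "cw A K x0 \<noteq> (\<lambda>i. 0)"
    proof
      assume "cw A K x0 = (\<lambda>i. 0)"
      have "x0 i = 0" for i
      proof (cases "i < K")
        case True
        then show ?thesis using fun_cong[OF \<open>cw A K x0 = (\<lambda>i. 0)\<close>, of i] by (simp add: cw_def)
      next
        case False
        then show ?thesis using x0(1) by (simp add: vecs_def)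
      qed
      then have "x0 = (\<lambda>i. 0)" by (intro ext) simp
      then show False using x0 by simp
    qed
    moreover have "hdist (2*K) (cw A K x0) (\<lambda>i. 0) = d"
      using x0(3) hweight_cw[of K A x0] by (simp add: hdist_def hweight_def)
    ultimately have "d = hdist (2*K) (cw A K x0) (\<lambda>i. 0) \<and> cw A K x0 \<in> scode A K \<and> (\<lambda>i. 0) \<in> scode A K \<and> cw A K x0 \<noteq> (\<lambda>i. 0)"
      by simp
    then show ?thesis by (intro CollectI exI)
  qed
qed

theorem code_main:
  assumes herm: "\<forall>i<K. \<forall>j<K. A j i = A i j ^ 2"
    and inj: "\<forall>u\<in>vecs K. (\<forall>l<K. mv A K u l = u l) \<longrightarrow> u = (\<lambda>i. 0)"
    and md: "\<forall>x\<in>vecs K. x \<noteq> (\<lambda>i. 0) \<longrightarrow> d \<le> hweight K x + hweight K (mv A K x)"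
    and x0: "x0 \<in> vecs K" "x0 \<noteq> (\<lambda>i. 0)" "hweight K x0 + hweight K (mv A K x0) = d"
  shows "herm_fsd_LCD (2*K) K d (scode A K)"
  unfolding herm_fsd_LCD_def
  using linear_code_code min_dist_code[OF md x0] lcd_code[OF herm inj] fsd_code[OF herm] by blast



definition bd :: "(nat \<Rightarrow> nat \<Rightarrow> gf4) \<Rightarrow> nat \<Rightarrow> nat \<Rightarrow> nat \<Rightarrow> gf4" where
  "bd A0 k i j = (if i div k = j div k then A0 (i mod k) (j mod k) else 0)"

definition blk :: "nat \<Rightarrow> (nat \<Rightarrow> gf4) \<Rightarrow> nat \<Rightarrow> nat \<Rightarrow> gf4" where
  "blk k x b r = (if r < k then x (b*k + r) else 0)"

lemma sum_regroup: "(\<Sum>j<(m::nat)*k. f j) = (\<Sum>b<m. \<Sum>r<k. (f (b*k + r) :: 'a::comm_monoid_add))"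
proof (induction m)
  case 0 then show ?case by simp
next
  case (Suc m)
  have "(\<Sum>j<Suc m * k. f j) = (\<Sum>j<m*k + k. f j)" by (simp add: add.commute)
  also have "\<dots> = (\<Sum>j<m*k. f j) + (\<Sum>r<k. f (m*k + r))" by (rule sum_split_nat)
  finally show ?case using Suc by simp
qed

lemma dm1: "r < (k::nat) \<Longrightarrow> (b*k + r) div k = b" by simp
lemma dm2: "r < (k::nat) \<Longrightarrow> (b*k + r) mod k = r" by simp

lemma blk_vecs: "blk k x b \<in> vecs k" by (simp add: vecs_def blk_def)

lemma mv_bd:
  assumes k: "0 < k" and b: "b < m" and r: "r < k"
  shows "mv (bd A0 k) (m*k) x (b*k + r) = mv A0 k (blk k x b) r"
proof -
  have "mv (bd A0 k) (m*k) x (b*k + r) = (\<Sum>b'<m. \<Sum>r'<k. x (b'*k+r') * bd A0 k (b'*k+r') (b*k+r))"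
    unfolding mv_def by (rule sum_regroup)
  also have "\<dots> = (\<Sum>b'<m. if b' = b then (\<Sum>r'<k. x (b*k+r') * A0 r' r) else 0)"
  proof (rule sum.cong)
    fix b' assume "b' \<in> {..<m}"
    show "(\<Sum>r'<k. x (b'*k+r') * bd A0 k (b'*k+r') (b*k+r)) = (if b' = b then (\<Sum>r'<k. x (b*k+r') * A0 r' r) else 0)"
    proof (cases "b' = b")
      case True
      have "(\<Sum>r'<k. x (b'*k+r') * bd A0 k (b'*k+r') (b*k+r)) = (\<Sum>r'<k. x (b*k+r') * A0 r' r)"
        using True r by (intro sum.cong) (simp_all add: bd_def dm1 dm2)
      then show ?thesis using True by simp
    next
      case False
      have "x (b'*k+r') * bd A0 k (b'*k+r') (b*k+r) = 0" if "r' < k" for r'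
        using False that r by (simp add: bd_def dm1)
      then show ?thesis using False by (simp add: sum.neutral)
    qed
  qed simp
  also have "\<dots> = (\<Sum>r'<k. x (b*k+r') * A0 r' r)" using b by simp
  also have "\<dots> = mv A0 k (blk k x b) r" unfolding mv_def blk_def by (rule sum.cong) auto
  finally show ?thesis .
qed

lemma divmod_decomp: "0 < (k::nat) \<Longrightarrow> l < m*k \<Longrightarrow> l div k < m \<and> l mod k < k \<and> l = (l div k)*k + l mod k"
  using less_mult_imp_div_less[of l m k] by simp

lemma blk_idx: "b < m \<Longrightarrow> r < k \<Longrightarrow> b*k + r < m*(k::nat)"
proof -
  assume b: "b < m" and r: "r < k"
  have "b*k + r < b*k + k" using r by simp
  also have "\<dots> = Suc b * k" by simp
  also have "\<dots> \<le> m*k" using b by (intro mult_le_mono1) simp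
  finally show ?thesis .
qed

lemma herm_bd:
  assumes k: "0 < k" and herm: "\<forall>i<k. \<forall>j<k. A0 j i = A0 i j ^ 2"
  shows "\<forall>i<m*k. \<forall>j<m*k. bd A0 k j i = bd A0 k i j ^ 2"
proof (intro allI impI)
  fix i j assume "i < m*k" "j < m*k"
  have "i mod k < k" "j mod k < k" using k by auto
  then have "A0 (j mod k) (i mod k) = A0 (i mod k) (j mod k) ^ 2" using herm by blast
  then show "bd A0 k j i = bd A0 k i j ^ 2" by (simp add: bd_def)
qed

lemma inj_bd:
  assumes k: "0 < k" and inj: "\<forall>u\<in>vecs k. (\<forall>l<k. mv A0 k u l = u l) \<longrightarrow> u = (\<lambda>i. 0)"
  shows "\<forall>u\<in>vecs (m*k). (\<forall>l<m*k. mv (bd A0 k) (m*k) u l = u l) \<longrightarrow> u = (\<lambda>i. 0)"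
proof (intro ballI impI)
  fix u assume uv: "u \<in> vecs (m*k)" and fix_: "\<forall>l<m*k. mv (bd A0 k) (m*k) u l = u l"
  have z: "blk k u b = (\<lambda>i. 0)" if b: "b < m" for b
  proof -
    have "\<forall>r<k. mv A0 k (blk k u b) r = blk k u b r"
    proof (intro allI impI)
      fix r assume r: "r < k"
      have "b*k + r < m*k"
        using b r by (rule blk_idx)
      then show "mv A0 k (blk k u b) r = blk k u b r"
        using fix_ mv_bd[OF k b r, of A0 u] r by (simp add: blk_def)
    qed
    moreover have "blk k u b \<in> vecs k" by (rule blk_vecs)
    ultimately show ?thesis using inj by blast
  qed
  show "u = (\<lambda>i. 0)"
  proof
    fix l
    show "u l = 0"
    proof (cases "l < m*k")
      case True
      with divmod_decomp[OF k] have d: "l div k < m" "l mod k < k" "l = (l div k)*k + l mod k" by auto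
      have "blk k u (l div k) (l mod k) = 0" using z[OF d(1)] by simp
      then have "u ((l div k)*k + l mod k) = 0" using d(2) by (simp add: blk_def)
      then show ?thesis using d(3) by metis
    next
      case False
      then show ?thesis using uv by (simp add: vecs_def)
    qed
  qed
qed


lemma hweight_regroup: "hweight (m*k) v = (\<Sum>b<m. \<Sum>r<k. if v (b*k+r) \<noteq> 0 then 1 else 0)"
  unfolding hweight_sum by (rule sum_regroup)

lemma hw_ind_le: "b < m \<Longrightarrow> (\<Sum>r<k. if v (b*k+r) \<noteq> 0 then 1 else 0) \<le> hweight (m*k) v"
  unfolding hweight_regroup by (rule member_le_sum) auto

lemma hw_blk: "hweight k (blk k x b) = (\<Sum>r<k. if x (b*k+r) \<noteq> 0 then 1 else 0)"
  unfolding hweight_sum blk_def by (rule sum.cong) auto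

lemma hw_mv_blk:
  assumes k: "0 < k" and b: "b < m"
  shows "hweight k (mv A0 k (blk k x b)) = (\<Sum>r<k. if mv (bd A0 k) (m*k) x (b*k+r) \<noteq> 0 then 1 else 0)"
  unfolding hweight_sum by (rule sum.cong) (simp_all add: mv_bd[OF k b])

lemma md_bd:
  assumes k: "0 < k"
    and md: "\<forall>x\<in>vecs k. x \<noteq> (\<lambda>i. 0) \<longrightarrow> d \<le> hweight k x + hweight k (mv A0 k x)"
  shows "\<forall>x\<in>vecs (m*k). x \<noteq> (\<lambda>i. 0) \<longrightarrow> d \<le> hweight (m*k) x + hweight (m*k) (mv (bd A0 k) (m*k) x)"
proof (intro ballI impI)
  fix x assume xv: "x \<in> vecs (m*k)" and nz: "x \<noteq> (\<lambda>i. 0)"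
  then obtain l where xl: "x l \<noteq> 0" by auto
  then have l: "l < m*k" using xv by (auto simp: vecs_def not_less[symmetric])
  with divmod_decomp[OF k] have dd: "l div k < m" "l mod k < k" "l = (l div k)*k + l mod k" by auto
  define b where "b = l div k"
  have "blk k x b (l mod k) \<noteq> 0" using dd xl unfolding b_def blk_def by metis
  then have "blk k x b \<noteq> (\<lambda>i. 0)" by auto
  then have "d \<le> hweight k (blk k x b) + hweight k (mv A0 k (blk k x b))"
    using md blk_vecs by blast
  also have "\<dots> \<le> hweight (m*k) x + hweight (m*k) (mv (bd A0 k) (m*k) x)"
    unfolding hw_blk hw_mv_blk[OF k dd(1)[folded b_def]]
    using hw_ind_le[OF dd(1)[folded b_def]] by (intro add_mono) blast+
  finally show "d \<le> hweight (m*k) x + hweight (m*k) (mv (bd A0 k) (m*k) x)" .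
qed

lemma wit_bd:
  assumes k: "0 < k" and m: "0 < m" and x0: "x0 \<in> vecs k"
  shows "x0 \<in> vecs (m*k)"
    and "hweight (m*k) x0 = hweight k x0"
    and "hweight (m*k) (mv (bd A0 k) (m*k) x0) = hweight k (mv A0 k x0)"
proof -
  have km: "k \<le> m*k" using m by simp
  show "x0 \<in> vecs (m*k)" using x0 le_trans[OF km] unfolding vecs_def by blast
  have "{i. i < m*k \<and> x0 i \<noteq> 0} = {i. i < k \<and> x0 i \<noteq> 0}"
    using x0 less_le_trans[OF _ km] by (auto simp: vecs_def not_less[symmetric])
  then show "hweight (m*k) x0 = hweight k x0" by (simp add: hweight_def)
  have inner: "(\<Sum>r<k. if mv (bd A0 k) (m*k) x0 (b*k+r) \<noteq> 0 then 1 else 0)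
      = (if b = 0 then hweight k (mv A0 k x0) else 0)" if b: "b < m" for b
  proof -
    have "(\<Sum>r<k. if mv (bd A0 k) (m*k) x0 (b*k+r) \<noteq> 0 then 1 else 0) = hweight k (mv A0 k (blk k x0 b))"
      by (rule hw_mv_blk[OF k b, symmetric])
    also have "\<dots> = (if b = 0 then hweight k (mv A0 k x0) else 0)"
    proof (cases "b = 0")
      case True
      have "mv A0 k (blk k x0 b) = mv A0 k x0"
        by (rule ext, rule mv_cong) (simp add: blk_def True)
      then show ?thesis using True by simp
    next
      case False
      have "mv A0 k (blk k x0 b) r = 0" for r
      proof -
        have "mv A0 k (blk k x0 b) r = mv A0 k (\<lambda>i. 0) r"
        proof (rule mv_cong)
          fix j assume "j < k"
          have "1*k \<le> b*k" using False by (intro mult_le_mono1) simp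
          then have "k \<le> b*k + j" by linarith
          then show "blk k x0 b j = 0" using x0 by (simp add: blk_def vecs_def)
        qed
        then show ?thesis by (simp add: mv_zero)
      qed
      then show ?thesis using False by (simp add: hweight_def)
    qed
    finally show ?thesis .
  qed
  have "hweight (m*k) (mv (bd A0 k) (m*k) x0) = (\<Sum>b<m. if b = 0 then hweight k (mv A0 k x0) else 0)"
    unfolding hweight_regroup using inner by (intro sum.cong) auto
  also have "\<dots> = hweight k (mv A0 k x0)" using m by simp
  finally show "hweight (m*k) (mv (bd A0 k) (m*k) x0) = hweight k (mv A0 k x0)" .
qed

theorem block_main:
  assumes k: "0 < k" and m: "0 < m"
    and herm: "\<forall>i<k. \<forall>j<k. A0 j i = A0 i j ^ 2"
    and inj: "\<forall>u\<in>vecs k. (\<forall>l<k. mv A0 k u l = u l) \<longrightarrow> u = (\<lambda>i. 0)"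
    and md: "\<forall>x\<in>vecs k. x \<noteq> (\<lambda>i. 0) \<longrightarrow> d \<le> hweight k x + hweight k (mv A0 k x)"
    and x0: "x0 \<in> vecs k" "x0 \<noteq> (\<lambda>i. 0)" "hweight k x0 + hweight k (mv A0 k x0) = d"
  shows "\<exists>C. herm_fsd_LCD (2*(m*k)) (m*k) d C"
proof -
  note w1 = wit_bd(1)[OF k m x0(1)] and w2 = wit_bd(2)[OF k m x0(1)]
    and w3 = wit_bd(3)[OF k m x0(1), of A0]
  have "herm_fsd_LCD (2*(m*k)) (m*k) d (scode (bd A0 k) (m*k))"
    by (rule code_main[OF herm_bd[OF k herm] inj_bd[OF k inj] md_bd[OF k md] w1 x0(2)])
      (simp add: w2 w3 x0(3))
  then show ?thesis by blast
qed



fun vadd :: "gf4 list \<Rightarrow> gf4 list \<Rightarrow> gf4 list" where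
  "vadd (a#as) (b#bs) = gf4_add a b # vadd as bs"
| "vadd _ _ = []"

definition smul :: "gf4 \<Rightarrow> gf4 list \<Rightarrow> gf4 list" where "smul c r = map (gf4_mul c) r"

fun lwt :: "gf4 list \<Rightarrow> nat" where
  "lwt [] = 0" | "lwt (a#as) = (if a = G0 then lwt as else Suc (lwt as))"

fun chk :: "nat \<Rightarrow> gf4 list list \<Rightarrow> nat \<Rightarrow> gf4 list \<Rightarrow> nat \<Rightarrow> bool" where
  "chk d [] b acc w = (w = 0 \<or> d \<le> w + lwt acc)"
| "chk d (r#rs) 0 acc w = (w = 0 \<or> d \<le> w + lwt acc)"
| "chk d (r#rs) (Suc b) acc w = (chk d rs (Suc b) acc w \<and>
     chk d rs b (vadd acc (smul G1 r)) (Suc w) \<and>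
     chk d rs b (vadd acc (smul GW r)) (Suc w) \<and>
     chk d rs b (vadd acc (smul GV r)) (Suc w))"

fun lc :: "gf4 list \<Rightarrow> gf4 list \<Rightarrow> gf4 list list \<Rightarrow> gf4 list" where
  "lc acc (c#cs) (r#rs) = lc (vadd acc (smul c r)) cs rs"
| "lc acc _ _ = acc"

lemma G0_eq: "G0 = 0" by (simp add: zero_gf4_def)
lemma G1_eq: "G1 = 1" by (simp add: one_gf4_def)

lemma length_vadd[simp]: "length (vadd a b) = min (length a) (length b)"
  by (induction a b rule: vadd.induct) auto

lemma nth_vadd: "l < length a \<Longrightarrow> l < length b \<Longrightarrow> vadd a b ! l = a!l + b!l"
proof (induction a b arbitrary: l rule: vadd.induct)
  case (1 a as b bs)
  then show ?case by (cases l) (auto simp: plus_gf4_def)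
qed auto

lemma length_smul[simp]: "length (smul c r) = length r" by (simp add: smul_def)
lemma nth_smul: "l < length r \<Longrightarrow> smul c r ! l = c * r!l" by (simp add: smul_def times_gf4_def)

lemma lc_len: "\<forall>r\<in>set rs. length r = length acc \<Longrightarrow> length (lc acc cs rs) = length acc"
  by (induction acc cs rs rule: lc.induct) auto

lemma lc_nth:
  "length cs = length rs \<Longrightarrow> \<forall>r\<in>set rs. length r = length acc \<Longrightarrow> l < length acc \<Longrightarrow>
   lc acc cs rs ! l = acc!l + (\<Sum>j<length cs. cs!j * rs!j!l)"
proof (induction acc cs rs rule: lc.induct)
  case (1 acc c cs r rs)
  have "lc acc (c#cs) (r#rs) ! l = vadd acc (smul c r) ! l + (\<Sum>j<length cs. cs!j * rs!j!l)"
    using 1 by simp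
  also have "\<dots> = acc!l + c * r!l + (\<Sum>j<length cs. cs!j * rs!j!l)"
    using 1 by (simp add: nth_vadd nth_smul)
  also have "\<dots> = acc!l + (\<Sum>j<length (c#cs). (c#cs)!j * (r#rs)!j!l)"
    by (simp add: sum.lessThan_Suc_shift add.assoc del: sum.lessThan_Suc)
  finally show ?case .
qed auto

lemma lwt_card: "lwt xs = card {i. i < length xs \<and> xs!i \<noteq> 0}"
proof -
  have "lwt xs = length (filter (\<lambda>a. a \<noteq> 0) xs)"
    by (induction xs) (auto simp: G0_eq)
  then show ?thesis by (simp add: length_filter_conv_card)
qed

lemma lwt_zero: "lwt cs = 0 \<Longrightarrow> i < length cs \<Longrightarrow> cs!i = 0"
proof -
  assume a: "lwt cs = 0" and i: "i < length cs"
  have "finite {i. i < length cs \<and> cs!i \<noteq> 0}" by simp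
  then have "{i. i < length cs \<and> cs!i \<noteq> 0} = {}" using a by (simp add: lwt_card)
  then show ?thesis using i by blast
qed

lemma lc_zero:
  "lwt cs = 0 \<Longrightarrow> \<forall>r\<in>set rs. length r = length acc \<Longrightarrow> lc acc cs rs = acc"
proof (induction acc cs rs rule: lc.induct)
  case (1 acc c cs r rs)
  have c: "c = G0" and l0: "lwt cs = 0" using "1.prems"(1) by (simp_all split: if_splits)
  have lr: "length r = length acc" and lrs: "\<forall>r\<in>set rs. length r = length acc"
    using "1.prems"(2) by auto
  have e: "vadd acc (smul c r) = acc"
    using lr by (intro nth_equalityI) (auto simp: nth_vadd nth_smul c G0_eq)
  have "lc (vadd acc (smul c r)) cs rs = vadd acc (smul c r)"
    by (rule "1.IH") (use l0 lrs e in simp_all)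
  then show ?case using e by simp
qed auto

lemma chk_sound:
  "chk d rs b acc w \<Longrightarrow> length cs = length rs \<Longrightarrow> \<forall>r\<in>set rs. length r = length acc \<Longrightarrow>
   lwt cs \<le> b \<Longrightarrow> 0 < w + lwt cs \<Longrightarrow> d \<le> w + lwt cs + lwt (lc acc cs rs)"
proof (induction d rs b acc w arbitrary: cs rule: chk.induct)
  case (1 d b acc w)
  then show ?case by simp
next
  case (2 d r rs acc w)
  then have "lwt cs = 0" by simp
  then show ?case using 2 lc_zero[of cs "r#rs" acc] by simp
next
  case (3 d r rs b acc w)
  obtain c cs' where cs: "cs = c # cs'" using "3.prems"(2) by (cases cs) auto
  have lcs': "length cs' = length rs" using "3.prems"(2) cs by simp
  have lr: "length r = length acc" and lrs: "\<forall>r\<in>set rs. length r = length acc"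
    using "3.prems"(3) by auto
  show ?case
  proof (cases "c = G0")
    case True
    have "vadd acc (smul c r) = acc"
      using lr by (intro nth_equalityI) (auto simp: nth_vadd nth_smul True G0_eq)
    then have e: "lc acc cs (r#rs) = lc acc cs' rs" by (simp add: cs)
    have l1: "lwt cs' = lwt cs" by (simp add: cs True)
    have c1: "chk d rs (Suc b) acc w" using "3.prems"(1) by simp
    have "d \<le> w + lwt cs' + lwt (lc acc cs' rs)"
      using "3.IH"(1)[OF c1 lcs' lrs] "3.prems"(4,5) l1 by simp
    then show ?thesis using e l1 by simp
  next
    case False
    have l1: "lwt cs = Suc (lwt cs')" using False by (simp add: cs)
    let ?acc = "vadd acc (smul c r)"
    have len: "\<forall>r\<in>set rs. length r = length ?acc" using lr lrs by simp
    have lb: "lwt cs' \<le> b" using "3.prems"(4) l1 by simp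
    have pos: "0 < Suc w + lwt cs'" by simp
    have "d \<le> Suc w + lwt cs' + lwt (lc ?acc cs' rs)"
    proof -
      have cc: "c = G1 \<or> c = GW \<or> c = GV" using False by (cases c) auto
      then show ?thesis
      proof (elim disjE)
        assume c: "c = G1"
        have "chk d rs b (vadd acc (smul G1 r)) (Suc w)" using "3.prems"(1) by simp
        from "3.IH"(2)[OF this lcs' _ lb pos] len c show ?thesis by simp
      next
        assume c: "c = GW"
        have "chk d rs b (vadd acc (smul GW r)) (Suc w)" using "3.prems"(1) by simp
        from "3.IH"(3)[OF this lcs' _ lb pos] len c show ?thesis by simp
      next
        assume c: "c = GV"
        have "chk d rs b (vadd acc (smul GV r)) (Suc w)" using "3.prems"(1) by simp
        from "3.IH"(4)[OF this lcs' _ lb pos] len c show ?thesis by simp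
      qed
    qed
    then show ?thesis using l1 by (simp add: cs)
  qed
qed


definition rows_ok :: "nat \<Rightarrow> gf4 list list \<Rightarrow> bool" where
  "rows_ok k M = (length M = k \<and> list_all (\<lambda>r. length r = k) M)"

lemma rows_ok_set: "rows_ok k M \<Longrightarrow> \<forall>r\<in>set M. length r = k"
  by (simp add: rows_ok_def list_all_iff)

lemma rows_ok_nth: "rows_ok k M \<Longrightarrow> i < k \<Longrightarrow> length (M!i) = k"
  by (simp add: rows_ok_def list_all_iff)

lemma lc_mv:
  assumes M: "rows_ok k M" and l: "l < k"
  shows "lc (replicate k G0) (map x [0..<k]) M ! l = mv (\<lambda>i j. M!i!j) k x l"
proof -
  have "lc (replicate k G0) (map x [0..<k]) M ! l = replicate k G0 ! l + (\<Sum>j<length (map x [0..<k]). map x [0..<k] ! j * M!j!l)"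
    using M l by (intro lc_nth) (auto simp: rows_ok_def list_all_iff)
  also have "\<dots> = mv (\<lambda>i j. M!i!j) k x l"
    using l by (simp add: mv_def G0_eq)
  finally show ?thesis .
qed

lemma chk_md:
  assumes M: "rows_ok k M" and c: "chk d M t (replicate k G0) 0"
  shows "\<forall>x\<in>vecs k. 0 < hweight k x \<longrightarrow> hweight k x \<le> t \<longrightarrow> d \<le> hweight k x + hweight k (mv (\<lambda>i j. M!i!j) k x)"
proof (intro ballI impI)
  fix x assume "x \<in> vecs k" "0 < hweight k x" "hweight k x \<le> t"
  let ?cs = "map x [0..<k]"
  have "{i. i < length ?cs \<and> ?cs ! i \<noteq> 0} = {i. i < k \<and> x i \<noteq> 0}" by auto
  then have w1: "lwt ?cs = hweight k x" by (simp add: lwt_card hweight_def)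
  have ll: "length (lc (replicate k G0) ?cs M) = k"
    using M by (simp add: lc_len rows_ok_def list_all_iff)
  have "{i. i < k \<and> lc (replicate k G0) ?cs M ! i \<noteq> 0} = {i. i < k \<and> mv (\<lambda>i j. M!i!j) k x i \<noteq> 0}"
    using lc_mv[OF M] by auto
  then have w2: "lwt (lc (replicate k G0) ?cs M) = hweight k (mv (\<lambda>i j. M!i!j) k x)"
    by (simp add: lwt_card hweight_def ll)
  have "d \<le> 0 + lwt ?cs + lwt (lc (replicate k G0) ?cs M)"
    by (rule chk_sound[OF c]) (use M \<open>0 < hweight k x\<close> \<open>hweight k x \<le> t\<close> w1 in \<open>auto simp: rows_ok_def list_all_iff\<close>)
  then show "d \<le> hweight k x + hweight k (mv (\<lambda>i j. M!i!j) k x)" using w1 w2 by simp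
qed

definition prodchk :: "nat \<Rightarrow> gf4 list list \<Rightarrow> gf4 list list \<Rightarrow> bool" where
  "prodchk k M B = list_all (\<lambda>i. lc (replicate k G0) (M!i) B = map (\<lambda>j. if i = j then G1 else G0) [0..<k]) [0..<k]"

lemma prodchk_sum:
  assumes M: "rows_ok k M" and B: "rows_ok k B" and p: "prodchk k M B"
  shows "\<forall>i<k. \<forall>j<k. (\<Sum>l<k. M!i!l * B!l!j) = (if i = j then 1 else 0)"
proof (intro allI impI)
  fix i j assume i: "i < k" and j: "j < k"
  have e: "lc (replicate k G0) (M!i) B = map (\<lambda>j. if i = j then G1 else G0) [0..<k]"
    using p i by (simp add: prodchk_def list_all_iff)
  have "lc (replicate k G0) (M!i) B ! j = replicate k G0 ! j + (\<Sum>l<length (M!i). M!i!l * B!l!j)"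
    using M B i j by (intro lc_nth) (auto simp: rows_ok_def list_all_iff)
  then have "(\<Sum>l<k. M!i!l * B!l!j) = lc (replicate k G0) (M!i) B ! j"
    using j rows_ok_nth[OF M i] by (simp add: G0_eq)
  also have "\<dots> = (if i = j then G1 else G0)" using e j by simp
  finally show "(\<Sum>l<k. M!i!l * B!l!j) = (if i = j then 1 else 0)"
    unfolding G0_eq G1_eq .
qed

lemma mv_mv:
  assumes AB: "\<forall>i<k. \<forall>j<k. (\<Sum>l<k. A i l * B l j) = (if i = j then 1 else 0)" and l: "l < k"
  shows "mv B k (mv A k x) l = x l"
proof -
  have "mv B k (mv A k x) l = (\<Sum>j<k. (\<Sum>i<k. x i * A i j) * B j l)" by (simp add: mv_def)
  also have "\<dots> = (\<Sum>i<k. x i * (\<Sum>j<k. A i j * B j l))"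
    unfolding sum_distrib_right sum_distrib_left by (subst sum.swap) (simp add: mult.assoc)
  also have "\<dots> = (\<Sum>i<k. x i * (if i = l then 1 else 0))"
    using AB l by (intro sum.cong) auto
  also have "\<dots> = x l" using l by (simp add: sum_unit_r[of l k x, simplified eq_commute])
  finally show ?thesis .
qed


definition hermchk :: "nat \<Rightarrow> gf4 list list \<Rightarrow> bool" where
  "hermchk k M = list_all (\<lambda>i. list_all (\<lambda>j. M!j!i = gf4_mul (M!i!j) (M!i!j)) [0..<k]) [0..<k]"

definition addIchk :: "nat \<Rightarrow> gf4 list list \<Rightarrow> gf4 list list \<Rightarrow> bool" where
  "addIchk k M P = list_all (\<lambda>i. list_all (\<lambda>j. P!i!j = gf4_add (M!i!j) (if i = j then G1 else G0)) [0..<k]) [0..<k]"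

definition good :: "nat \<Rightarrow> nat \<Rightarrow> nat \<Rightarrow> nat \<Rightarrow> gf4 list list \<Rightarrow> gf4 list list \<Rightarrow> gf4 list list \<Rightarrow> gf4 list list \<Rightarrow> bool" where
  "good k d t r M B P N = (0 < k \<and> rows_ok k M \<and> rows_ok k B \<and> rows_ok k P \<and> rows_ok k N \<and>
     hermchk k M \<and> addIchk k M P \<and> prodchk k M B \<and> prodchk k P N \<and>
     chk d M t (replicate k G0) 0 \<and> chk d B t (replicate k G0) 0 \<and>
     r < k \<and> Suc (lwt (M!r)) = d \<and> d \<le> 2*t+2)"

lemma good_props:
  assumes g: "good k d t r M B P N"
  defines "A0 \<equiv> (\<lambda>i j. M!i!j)"
  shows "\<forall>i<k. \<forall>j<k. A0 j i = A0 i j ^ 2"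
    and "\<forall>u\<in>vecs k. (\<forall>l<k. mv A0 k u l = u l) \<longrightarrow> u = (\<lambda>i. 0)"
    and "\<forall>x\<in>vecs k. x \<noteq> (\<lambda>i. 0) \<longrightarrow> d \<le> hweight k x + hweight k (mv A0 k x)"
    and "(\<lambda>i. if i = r then 1 else 0) \<in> vecs k" "(\<lambda>i. if i = r then (1::gf4) else 0) \<noteq> (\<lambda>i. 0)"
        "hweight k (\<lambda>i. if i = r then 1 else 0) + hweight k (mv A0 k (\<lambda>i. if i = r then 1 else 0)) = d"
proof -
  have k: "0 < k" and M: "rows_ok k M" and B: "rows_ok k B" and P: "rows_ok k P" and N: "rows_ok k N"
    and h: "hermchk k M" and ai: "addIchk k M P" and pMB: "prodchk k M B" and pPN: "prodchk k P N"
    and cM: "chk d M t (replicate k G0) 0" and cB: "chk d B t (replicate k G0) 0"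
    and r: "r < k" and wr: "Suc (lwt (M!r)) = d" and dt: "d \<le> 2*t+2"
    using g by (auto simp: good_def)
  show "\<forall>i<k. \<forall>j<k. A0 j i = A0 i j ^ 2"
  proof (intro allI impI)
    fix i j assume i: "i < k" and j: "j < k"
    have "\<forall>i\<in>set [0..<k]. \<forall>j\<in>set [0..<k]. M!j!i = gf4_mul (M!i!j) (M!i!j)"
      using h unfolding hermchk_def list_all_iff .
    moreover have "i \<in> set [0..<k]" "j \<in> set [0..<k]" using i j by simp_all
    ultimately have "M!j!i = gf4_mul (M!i!j) (M!i!j)" by blast
    then show "A0 j i = A0 i j ^ 2" unfolding A0_def power2_eq_square times_gf4_def .
  qed
  show "\<forall>u\<in>vecs k. (\<forall>l<k. mv A0 k u l = u l) \<longrightarrow> u = (\<lambda>i. 0)"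
  proof (intro ballI impI)
    fix u assume uv: "u \<in> vecs k" and fx: "\<forall>l<k. mv A0 k u l = u l"
    have PN: "\<forall>i<k. \<forall>j<k. (\<Sum>l<k. P!i!l * N!l!j) = (if i = j then 1 else 0)"
      by (rule prodchk_sum[OF P N pPN])
    have Pe: "P!i!j = A0 i j + (if i = j then 1 else 0)" if "i < k" "j < k" for i j
      using ai that by (simp add: addIchk_def list_all_iff A0_def plus_gf4_def G0_eq G1_eq)
    have z: "mv (\<lambda>i j. P!i!j) k u l = 0" if l: "l < k" for l
    proof -
      have "mv (\<lambda>i j. P!i!j) k u l = (\<Sum>j<k. u j * A0 j l + u j * (if l = j then 1 else 0))"
        unfolding mv_def using l by (intro sum.cong) (auto simp: Pe distrib_left)
      also have "\<dots> = mv A0 k u l + u l"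
        using l by (simp add: sum.distrib mv_def sum_unit_r)
      finally show ?thesis using fx l by simp
    qed
    show "u = (\<lambda>i. 0)"
    proof
      fix l show "u l = 0"
      proof (cases "l < k")
        case True
        have "u l = mv (\<lambda>i j. N!i!j) k (mv (\<lambda>i j. P!i!j) k u) l"
          using mv_mv[OF PN True] by simp
        also have "\<dots> = mv (\<lambda>i j. N!i!j) k (\<lambda>i. 0) l" by (rule mv_cong) (simp add: z)
        finally show ?thesis by (simp add: mv_zero)
      next
        case False then show ?thesis using uv by (simp add: vecs_def)
      qed
    qed
  qed
  show "\<forall>x\<in>vecs k. x \<noteq> (\<lambda>i. 0) \<longrightarrow> d \<le> hweight k x + hweight k (mv A0 k x)"
  proof (intro ballI impI)
    fix x assume xv: "x \<in> vecs k" and nz: "x \<noteq> (\<lambda>i. 0)"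
    have MB: "\<forall>i<k. \<forall>j<k. (\<Sum>l<k. M!i!l * B!l!j) = (if i = j then 1 else 0)"
      by (rule prodchk_sum[OF M B pMB])
    note mdM = chk_md[OF M cM, folded A0_def] and mdB = chk_md[OF B cB]
    have hx: "0 < hweight k x"
    proof -
      obtain i where "x i \<noteq> 0" using nz by auto
      then have "i < k" using xv by (auto simp: vecs_def not_less[symmetric])
      then have "i \<in> {i. i < k \<and> x i \<noteq> 0}" using \<open>x i \<noteq> 0\<close> by simp
      then show ?thesis unfolding hweight_def by (metis card_gt_0_iff empty_iff finite_Collect_conjI finite_Collect_less_nat)
    qed
    define y where "y l = (if l < k then mv A0 k x l else 0)" for l
    have yv: "y \<in> vecs k" by (simp add: y_def vecs_def)
    have hy: "hweight k y = hweight k (mv A0 k x)"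
      unfolding hweight_def y_def by (metis (mono_tags, lifting))
    have yx: "mv (\<lambda>i j. B!i!j) k y l = x l" if "l < k" for l
    proof -
      have "mv (\<lambda>i j. B!i!j) k y l = mv (\<lambda>i j. B!i!j) k (mv A0 k x) l"
        by (rule mv_cong) (simp add: y_def)
      also have "\<dots> = x l" using mv_mv[OF MB that] by (simp add: A0_def)
      finally show ?thesis .
    qed
    have hyx: "hweight k (mv (\<lambda>i j. B!i!j) k y) = hweight k x"
      unfolding hweight_def using yx by (metis (mono_tags, lifting))
    show "d \<le> hweight k x + hweight k (mv A0 k x)"
    proof (cases "hweight k x \<le> t")
      case True
      then show ?thesis using mdM xv hx by blast
    next
      case False
      show ?thesis
      proof (cases "hweight k y \<le> t")
        case True
        have "0 < hweight k y"
        proof (rule ccontr)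
          assume "\<not> 0 < hweight k y"
          then have "hweight k (mv (\<lambda>i j. B!i!j) k y) = 0"
          proof -
            assume "\<not> 0 < hweight k y"
            then have "{i. i < k \<and> y i \<noteq> 0} = {}" unfolding hweight_def by simp
            then have "y j = 0" if "j < k" for j using that by blast
            then have "mv (\<lambda>i j. B!i!j) k y l = mv (\<lambda>i j. B!i!j) k (\<lambda>i. 0) l" for l
              by (intro mv_cong) simp
            then show ?thesis by (simp add: mv_zero hweight_def)
          qed
          then show False using hyx hx by simp
        qed
        then have "d \<le> hweight k y + hweight k (mv (\<lambda>i j. B!i!j) k y)"
          using mdB yv True by blast
        then show ?thesis using hy hyx by simp
      next
        case False2: False
        then show ?thesis using False dt hy by simp
      qed
    qed
  qed
  show "(\<lambda>i. if i = r then 1 else 0) \<in> vecs k" using r by (simp add: vecs_def)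
  show "(\<lambda>i. if i = r then (1::gf4) else 0) \<noteq> (\<lambda>i. 0)" by (metis one_neq_zero)
  have "{i. i < k \<and> (if i = r then (1::gf4) else 0) \<noteq> 0} = {r}" using r by auto
  then have h1: "hweight k (\<lambda>i. if i = r then (1::gf4) else 0) = 1" by (simp add: hweight_def)
  have mvr: "mv A0 k (\<lambda>i. if i = r then 1 else 0) l = M!r!l" for l
    using mv_unit[OF r] by (simp add: A0_def)
  have "hweight k (mv A0 k (\<lambda>i. if i = r then 1 else 0)) = lwt (M!r)"
    unfolding hweight_def mvr lwt_card using rows_ok_nth[OF M r] by simp
  then show "hweight k (\<lambda>i. if i = r then 1 else 0) + hweight k (mv A0 k (\<lambda>i. if i = r then 1 else 0)) = d"
    using h1 wr by simp
qed

theorem good_main: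
  assumes g: "good k d t r M B P N" and m: "0 < m"
  shows "\<exists>C. herm_fsd_LCD (2*(m*k)) (m*k) d C"
proof -
  have k: "0 < k" using g by (simp add: good_def)
  note gp = good_props[OF g]
  show ?thesis by (rule block_main[OF k m gp(1) gp(2) gp(3) gp(4) gp(5) gp(6)])
qed



definition "M8 = [[G0, GV, GV, G0, G1, G1, GW, G0], [GW, G1, G1, GW, GW, G1, GV, G1], [GW, G1, G1, G0, G0, G0, G1, G1], [G0, GV, G0, G1, GV, G1, GV, GW], [G1, GV, G0, GW, G0, GW, GV, GW], [G1, G1, G0, G1, GV, G0, GV, G1], [GV, GW, G1, GW, GW, GW, G1, G0], [G0, G1, G1, GV, GV, G1, G0, G0]]"
definition "B8 = [[G1, G1, G0, GW, G1, G0, GV, G1], [G1, G0, G1, GW, G1, G0, G1, GV], [G0, G1, G0, G0, GW, GW, GV, GV], [GV, GV, G0, G0, GV, GW, G0, G1], [G1, G1, GV, GW, G1, GV, GW, GV], [G0, G0, GV, GV, GW, G1, GV, G0], [GW, G1, GW, G0, GV, GW, G0, GW], [G1, GW, GW, G1, GW, G0, GV, G0]]"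
definition "P8 = [[G1, GV, GV, G0, G1, G1, GW, G0], [GW, G0, G1, GW, GW, G1, GV, G1], [GW, G1, G0, G0, G0, G0, G1, G1], [G0, GV, G0, G0, GV, G1, GV, GW], [G1, GV, G0, GW, G1, GW, GV, GW], [G1, G1, G0, G1, GV, G1, GV, G1], [GV, GW, G1, GW, GW, GW, G0, G0], [G0, G1, G1, GV, GV, G1, G0, G1]]"
definition "N8 = [[G1, G0, GV, G1, GV, G0, GV, G0], [G0, G1, GW, GW, G1, G1, GW, GV], [GW, GV, G1, G1, GV, GW, G0, GV], [G1, GV, G1, G1, GW, G1, GW, GW], [GW, G1, GW, GV, G1, G1, G1, G1], [G0, G1, GV, G1, G1, G0, GV, GW], [GW, GV, G0, GV, G1, GW, G0, GW], [G0, GW, GW, GV, G1, GV, GV, G1]]"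
definition "M10 = [[G0, G0, GW, G0, G0, GV, G1, G1, G1, GW], [G0, G0, GW, GV, G1, G1, G0, GW, G1, G1], [GV, GV, G1, GV, G0, G0, GV, GW, GV, G0], [G0, GW, GW, G1, GW, GV, GV, G0, GV, GW], [G0, G1, G0, GV, G1, GW, GV, GW, G1, GW], [GW, G1, G0, GW, GV, G0, GW, GW, G1, G1], [G1, G0, GW, GW, GW, GV, G1, GW, GW, GV], [G1, GV, GV, G0, GV, GV, GV, G0, G0, G1], [G1, G1, GW, GW, G1, G1, GV, G0, G1, G1], [GV, G1, G0, GV, GV, G1, GW, G1, G1, G0]]"
definition "B10 = [[G0, GW, G0, G0, GW, G1, GV, G1, GV, GV], [GV, G0, G0, GV, G1, GV, G0, GW, GV, G0], [G0, G0, G1, G1, GV, GV, G1, G1, GW, G0], [G0, GW, G1, G1, GW, G0, GW, G0, GW, G1], [GV, G1, GW, GV, G0, G0, GW, GV, GV, G1], [G1, GW, GW, G0, G0, G1, G0, G1, G0, GV], [GW, G0, G1, GV, GV, G0, G1, G1, G1, GV], [G1, GV, G1, G0, GW, G1, G1, G0, G0, G0], [GW, GW, GV, GV, GW, G0, G1, G0, G0, G1], [GW, G0, G0, G1, G1, GW, GW, G0, G1, G0]]"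
definition "P10 = [[G1, G0, GW, G0, G0, GV, G1, G1, G1, GW], [G0, G1, GW, GV, G1, G1, G0, GW, G1, G1], [GV, GV, G0, GV, G0, G0, GV, GW, GV, G0], [G0, GW, GW, G0, GW, GV, GV, G0, GV, GW], [G0, G1, G0, GV, G0, GW, GV, GW, G1, GW], [GW, G1, G0, GW, GV, G1, GW, GW, G1, G1], [G1, G0, GW, GW, GW, GV, G0, GW, GW, GV], [G1, GV, GV, G0, GV, GV, GV, G1, G0, G1], [G1, G1, GW, GW, G1, G1, GV, G0, G0, G1], [GV, G1, G0, GV, GV, G1, GW, G1, G1, G1]]"
definition "N10 = [[G1, GV, GV, GW, GV, G0, GW, GW, G1, G1], [GW, G1, G0, GW, GV, G0, G0, G0, G1, G1], [GW, G0, G0, GW, G0, GW, G1, G0, GW, GV], [GV, GV, GV, G1, G1, G0, GV, G1, G0, G1], [GW, GW, G0, G1, G0, G0, G0, GW, GW, GV], [G0, G0, GV, G0, G0, G0, G1, GV, G0, G0], [GV, G0, G1, GW, G0, G1, G1, GV, G1, GW], [GV, G0, G0, G1, GV, GW, GW, G1, GW, GW], [G1, G1, GV, G0, GV, G0, G1, GV, G0, GW], [G1, G1, GW, G1, GW, G0, GV, GV, GV, G1]]"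
definition "M12 = [[G0, GV, GW, G1, G1, GW, G0, G0, GV, G1, GV, G1], [GW, G0, GW, G0, GV, G0, G1, GW, G0, GV, G1, G0], [GV, GV, G1, G1, GW, GV, G1, G1, GW, G1, GV, GV], [G1, G0, G1, G1, GV, GW, G0, G0, GV, G0, G1, GV], [G1, GW, GV, GW, G0, G1, G1, GV, GV, GW, GW, GW], [GV, G0, GW, GV, G1, G0, GV, GW, G1, GW, G1, GW], [G0, G1, G1, G0, G1, GW, G0, G0, GW, GW, G1, G0], [G0, GV, G1, G0, GW, GV, G0, G1, G0, GV, G1, GV], [GW, G0, GV, GW, GW, G1, GV, G0, G0, G1, G1, G0], [G1, GW, G1, G0, GV, GV, GV, GW, G1, G1, G0, G1], [GW, G1, GW, G1, GV, G1, G1, G1, G1, G0, G0, G0], [G1, G0, GW, GW, GV, GV, G0, GW, G0, G1, G0, G0]]"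
definition "B12 = [[G0, GV, GV, GW, G1, GW, GV, GW, GW, GV, GV, G1], [GW, G1, G1, G0, GW, G1, G0, GV, GW, GW, G1, GV], [GW, G1, G0, G1, GV, G1, GV, GW, G0, GV, GV, G1], [GV, G0, G1, G1, G1, GW, G1, GV, GW, G0, G0, G1], [G1, GV, GW, G1, G1, G1, G0, GV, G0, G1, G0, GW], [GV, G1, G1, GV, G1, G0, GV, G0, GW, G0, G0, G0], [GW, G0, GW, G1, G0, GW, G1, GW, G0, GW, GV, GW], [GV, GW, GV, GW, GW, G0, GV, G0, G0, GV, G1, G0], [GV, GV, G0, GV, G0, GV, G0, G0, G1, G0, GW, G1], [GW, GV, GW, G0, G1, G0, GV, GW, G0, G0, G0, G1], [GW, G1, GW, G0, G0, G0, GW, G1, GV, G0, G1, G0], [G1, GW, G1, G1, GV, G0, GV, G0, G1, G1, G0, G1]]"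
definition "P12 = [[G1, GV, GW, G1, G1, GW, G0, G0, GV, G1, GV, G1], [GW, G1, GW, G0, GV, G0, G1, GW, G0, GV, G1, G0], [GV, GV, G0, G1, GW, GV, G1, G1, GW, G1, GV, GV], [G1, G0, G1, G0, GV, GW, G0, G0, GV, G0, G1, GV], [G1, GW, GV, GW, G1, G1, G1, GV, GV, GW, GW, GW], [GV, G0, GW, GV, G1, G1, GV, GW, G1, GW, G1, GW], [G0, G1, G1, G0, G1, GW, G1, G0, GW, GW, G1, G0], [G0, GV, G1, G0, GW, GV, G0, G0, G0, GV, G1, GV], [GW, G0, GV, GW, GW, G1, GV, G0, G1, G1, G1, G0], [G1, GW, G1, G0, GV, GV, GV, GW, G1, G0, G0, G1], [GW, G1, GW, G1, GV, G1, G1, G1, G1, G0, G1, G0], [G1, G0, GW, GW, GV, GV, G0, GW, G0, G1, G0, G1]]"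
definition "N12 = [[G1, GV, GW, GV, G0, G1, G0, G1, GW, G1, G0, GW], [GW, G1, GW, GW, GW, GV, G1, G0, GW, G1, G0, G1], [GV, GV, G0, G0, G1, G0, G0, GV, GV, G1, GV, GW], [GW, GV, G0, G0, GW, G1, GV, G0, G0, GV, GV, G0], [G0, GV, G1, GV, G0, GV, GW, G0, GV, GW, G1, GW], [G1, GW, G0, G1, GW, G1, GV, GV, G0, GV, GW, GW], [G0, G1, G0, GW, GV, GW, G0, G1, GW, G0, GV, G0], [G1, G0, GW, G0, G0, GW, G1, G0, G0, G1, G1, GW], [GV, GV, GW, G0, GW, G0, GV, G0, G0, G0, G0, G1], [G1, G1, G1, GW, GV, GW, G0, G1, G0, G1, G1, GV], [G0, G0, GW, GW, G1, GV, GW, G1, G0, G1, G0, G1], [GV, G1, GV, G0, GV, GV, G0, GV, G1, GW, G1, G0]]"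

lemma good8: "good 8 6 2 0 M8 B8 P8 N8"
  unfolding M8_def B8_def P8_def N8_def by code_simp

lemma good10: "good 10 7 3 0 M10 B10 P10 N10"
  unfolding M10_def B10_def P10_def N10_def by code_simp

lemma good12: "good 12 8 3 1 M12 B12 P12 N12"
  unfolding M12_def B12_def P12_def N12_def by code_simp

theorem theorem8:
  fixes s :: nat
  assumes "s \<ge> 1"
  shows "(\<exists>C. herm_fsd_LCD (32*s) (16*s) 6 C) \<and>
         (\<exists>C. herm_fsd_LCD (40*s) (20*s) 7 C) \<and>
         (\<exists>C. herm_fsd_LCD (48*s) (24*s) 8 C)"
proof -
  have m: "0 < 2*s" using assms by simp
  have a: "\<exists>C. herm_fsd_LCD (2*((2*s)*8)) ((2*s)*8) 6 C" by (rule good_main[OF good8 m])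
  have b: "\<exists>C. herm_fsd_LCD (2*((2*s)*10)) ((2*s)*10) 7 C" by (rule good_main[OF good10 m])
  have c: "\<exists>C. herm_fsd_LCD (2*((2*s)*12)) ((2*s)*12) 8 C" by (rule good_main[OF good12 m])
  have e: "2*((2*s)*8) = 32*s" "(2*s)*8 = 16*s" "2*((2*s)*10) = 40*s" "(2*s)*10 = 20*s"
    "2*((2*s)*12) = 48*s" "(2*s)*12 = 24*s" by simp_all
  have e2: "2*(16*s) = 32*s" "2*(20*s) = 40*s" "2*(24*s) = 48*s" by simp_all
  show ?thesis using a b c unfolding e e2 by blast
qed


end
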